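(* For Pólya trees $t$ let $k=|t|$ and let $S_t$, $T$ be as in the context. Then \[ \sum_{\substack{t \in \mathcal{P}_{\le n}\\ |t| < \log n}} \left(1 - \frac{[z^n]S_t(z)}{[z^n]T(z)}\right) = \mathcal{O}\!\left(\frac{n}{(\log n)^{3/2}}\right) \quad \text{as } n\to\infty, \] where $\log$ denotes the logarithm to base $1/\sigma$.
   Context: A recursive tree of size $n$ is a rooted non-plane tree with $n$ nodes labeled $1,\dots,n$ with labels increasing along every path from the root; their exponential generating function is $T(z)=\ln\frac{1}{1-z}$, so $[z^n]T(z)=1/n$. A Pólya tree is an unlabeled rooted non-plane tree; $\mathcal{P}_{\le n}$ is the set of Pólya trees with at most $n$ nodes; $\sigma\approx 0.338$ is the radius of convergence of the ordinary generating function of Pólya trees. A fringe subtree is a node together with all its descendants; its shape is the Pólya tree obtained by forgetting labels. For a Pólya tree $t$ with $k$ nodes, $\ell(t)$ is the number of increasing labelings of $t$ by $1,\dots,k$, $w(t)=\ell(t)/k!$ and $P_t(z)=w(t)z^k$. $S_t(z)$ is the exponential generating function of recursive trees having no fringe subtree of shape $t$; it is the solution of $S_t'(z)=\exp(S_t(z))-P_t'(z)$, $S_t(0)=0$, explicitly $S_t(z)=\ln\frac{1}{1-\int_0^z e^{-P_t(v)}\,dv}-P_t(z)$. Thus $1-[z^n]S_t(z)/[z^n]T(z)$ is the probability that a uniformly random recursive tree of size $n$ has a fringe subtree of shape $t$. *)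

theory Defs
  imports "HOL-Analysis.Analysis" "HOL-Library.Multiset" "HOL-Library.Landau_Symbols"
begin

text \<open>Polya trees: unlabeled rooted non-plane trees (children form a multiset).\<close>
datatype ptree = PNode "ptree multiset"

primrec psize :: "ptree \<Rightarrow> nat" where
  "psize (PNode ts) = Suc (sum_mset (image_mset psize ts))"

datatype ltree = LNode nat "ltree multiset"

primrec lsize :: "ltree \<Rightarrow> nat" where
  "lsize (LNode a ts) = Suc (sum_mset (image_mset lsize ts))"

primrec labels :: "ltree \<Rightarrow> nat set" where
  "labels (LNode a ts) = insert a (\<Union> (set_mset (image_mset labels ts)))"

primrec fringe :: "ltree \<Rightarrow> ltree set" where
  "fringe (LNode a ts) = insert (LNode a ts) (\<Union> (set_mset (image_mset fringe ts)))"

primrec shape :: "ltree \<Rightarrow> ptree" where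
  "shape (LNode a ts) = PNode (image_mset shape ts)"

definition lroot :: "ltree \<Rightarrow> nat" where
  "lroot r = (case r of LNode a ts \<Rightarrow> a)"

definition lchildren :: "ltree \<Rightarrow> ltree multiset" where
  "lchildren r = (case r of LNode a ts \<Rightarrow> ts)"

definition increasing :: "ltree \<Rightarrow> bool" where
  "increasing r \<longleftrightarrow> (\<forall>s\<in>fringe r. \<forall>c\<in>#lchildren s. lroot s < lroot c)"

text \<open>Recursive tree of size n: n nodes labeled (bijectively) by 1..n, increasing.\<close>
definition recursive_tree :: "nat \<Rightarrow> ltree \<Rightarrow> bool" where
  "recursive_tree n r \<longleftrightarrow> lsize r = n \<and> labels r = {1..n} \<and> increasing r"

definition has_fringe_shape :: "ptree \<Rightarrow> ltree \<Rightarrow> bool" where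
  "has_fringe_shape t r \<longleftrightarrow> (\<exists>s\<in>fringe r. shape s = t)"

definition egf_coeff :: "(ltree \<Rightarrow> bool) \<Rightarrow> nat \<Rightarrow> real" where
  "egf_coeff P n = real (card {r. recursive_tree n r \<and> P r}) / fact n"

definition T_coeff :: "nat \<Rightarrow> real" where
  "T_coeff n = egf_coeff (\<lambda>_. True) n"

definition S_coeff :: "ptree \<Rightarrow> nat \<Rightarrow> real" where
  "S_coeff t n = egf_coeff (\<lambda>r. \<not> has_fringe_shape t r) n"

definition polya_sigma :: real where
  "polya_sigma = real_of_ereal (conv_radius (\<lambda>n. real (card {t. psize t = n})))"

end

theory Submission
  imports Defs "HOL-Real_Asymp.Real_Asymp"
begin

primrec ml :: "ltree \<Rightarrow> nat multiset" where
  "ml (LNode a ts) = add_mset a (sum_mset (image_mset ml ts))"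

lemma size_ml: "size (ml r) = lsize r"
  by (induction r) (auto simp: image_mset.compositionality o_def intro!: arg_cong[where f=sum_mset] image_mset_cong)

lemma set_ml: "set_mset (ml r) = labels r"
  by (induction r) auto

definition dl :: "ltree \<Rightarrow> bool" where
  "dl r \<longleftrightarrow> (\<forall>x. count (ml r) x \<le> 1)"

lemma lsize_pos: "lsize r \<ge> 1"
  by (cases r) auto

lemma finite_labels: "finite (labels r)"
  by (metis finite_set_mset set_ml)

lemma card_eq_size_dl:
  assumes "card (labels r) = lsize r" shows "dl r"
proof -
  let ?M = "ml r"
  have e: "size ?M = (\<Sum>x\<in>set_mset ?M. count ?M x)"
    by (simp add: size_multiset_overloaded_eq)
  have c: "card (set_mset ?M) = size ?M" using assms by (simp add: set_ml size_ml)
  show ?thesis unfolding dl_def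
  proof
    fix x show "count ?M x \<le> 1"
    proof (rule ccontr)
      assume "\<not> count ?M x \<le> 1"
      hence x2: "count ?M x \<ge> 2" by simp
      hence x: "x \<in># ?M" "count ?M x \<ge> 2" by (auto simp flip: count_greater_zero_iff)
      have s1: "(\<Sum>y\<in>set_mset ?M. count ?M y) = count ?M x + (\<Sum>y\<in>set_mset ?M - {x}. count ?M y)"
        using x by (simp add: sum.remove)
      have s2: "(\<Sum>y\<in>set_mset ?M - {x}. count ?M y) \<ge> (\<Sum>y\<in>set_mset ?M - {x}. 1)"
        by (rule sum_mono) auto
      have "size ?M \<ge> 2 + card (set_mset ?M - {x})" using x e s1 s2 by simp
      moreover have "card (set_mset ?M - {x}) = card (set_mset ?M) - 1" using x by simp
      moreover have "card (set_mset ?M) \<ge> 1" using x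
        by (metis One_nat_def Suc_leI card_gt_0_iff empty_iff finite_set_mset)
      ultimately show False using c by linarith
    qed
  qed
qed

lemma rec_dl: "recursive_tree n r \<Longrightarrow> dl r"
  unfolding recursive_tree_def by (intro card_eq_size_dl) simp

lemma fringe_self: "r \<in> fringe r"
  by (cases r) auto

lemma fringe_trans: "s \<in> fringe r \<Longrightarrow> fringe s \<subseteq> fringe r"
  by (induction r) auto

lemma fringe_child: "c \<in># ts \<Longrightarrow> fringe c \<subseteq> fringe (LNode a ts)"
  by auto

lemma ml_child: "c \<in># ts \<Longrightarrow> ml c \<subseteq># sum_mset (image_mset ml ts)"
  by (metis image_mset_add_mset insert_DiffM mset_subset_eq_add_left sum_mset.insert)

lemma ml_fringe: "s \<in> fringe r \<Longrightarrow> ml s \<subseteq># ml r"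
proof (induction r)
  case (LNode a ts)
  show ?case
  proof (cases "s = LNode a ts")
    case False
    then obtain c where c: "c \<in># ts" "s \<in> fringe c" using LNode.prems by auto
    have "ml s \<subseteq># ml c" using LNode.IH c by auto
    also have "ml c \<subseteq># sum_mset (image_mset ml ts)" using ml_child[OF c(1)] .
    also have "\<dots> \<subseteq># ml (LNode a ts)" by simp
    finally show ?thesis .
  qed simp
qed

lemma dl_sub: "dl r \<Longrightarrow> ml s \<subseteq># ml r \<Longrightarrow> dl s"
  unfolding dl_def by (meson le_trans mset_subset_eq_count)

lemma dl_fringe: "dl r \<Longrightarrow> s \<in> fringe r \<Longrightarrow> dl s"
  using dl_sub ml_fringe by blast

lemma labels_fringe: "s \<in> fringe r \<Longrightarrow> labels s \<subseteq> labels r"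
  by (metis ml_fringe set_ml set_mset_mono)

lemma dl_child: "dl (LNode a ts) \<Longrightarrow> c \<in># ts \<Longrightarrow> dl c"
  using dl_fringe fringe_self fringe_child by blast

lemma dl_root_notin: "dl (LNode a ts) \<Longrightarrow> c \<in># ts \<Longrightarrow> a \<notin> labels c"
proof
  assume d: "dl (LNode a ts)" and c: "c \<in># ts" and a: "a \<in> labels c"
  have "count (ml c) a \<ge> 1" using a by (simp flip: set_ml)
  hence "count (sum_mset (image_mset ml ts)) a \<ge> 1" using ml_child[OF c]
    by (meson le_trans mset_subset_eq_count)
  hence "count (ml (LNode a ts)) a \<ge> 2" by simp
  thus False using d unfolding dl_def by (metis numeral_le_one_iff semiring_norm(69) le_trans)
qed

lemma dl_disj: "dl (LNode a ts) \<Longrightarrow> c \<in># ts \<Longrightarrow> d \<in># ts - {#c#} \<Longrightarrow> labels c \<inter> labels d = {}"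
proof -
  assume dd: "dl (LNode a ts)" and c: "c \<in># ts" and d: "d \<in># ts - {#c#}"
  have "ts = add_mset c (add_mset d (ts - {#c#} - {#d#}))" using c d
    by (metis insert_DiffM)
  hence "sum_mset (image_mset ml ts) = ml c + ml d + sum_mset (image_mset ml (ts - {#c#} - {#d#}))"
    by (metis (no_types, lifting) add.assoc image_mset_add_mset sum_mset.insert)
  hence sub: "ml c + ml d \<subseteq># ml (LNode a ts)" by (simp add: subset_mset.add_increasing2)
  show ?thesis
  proof (rule ccontr)
    assume "labels c \<inter> labels d \<noteq> {}"
    then obtain x where "x \<in># ml c" "x \<in># ml d" by (auto simp flip: set_ml)
    hence "count (ml c + ml d) x \<ge> 2" by (simp flip: count_greater_zero_iff)
    hence "count (ml (LNode a ts)) x \<ge> 2" using sub by (meson le_trans mset_subset_eq_count)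
    thus False using dd unfolding dl_def by (metis numeral_le_one_iff semiring_norm(69) le_trans)
  qed
qed


primrec ins :: "nat \<Rightarrow> nat \<Rightarrow> ltree \<Rightarrow> ltree" where
  "ins p m (LNode a ts) = LNode a (image_mset (ins p m) ts + (if a = p then {#LNode m {#}#} else {#}))"

primrec del :: "nat \<Rightarrow> ltree \<Rightarrow> ltree" where
  "del m (LNode a ts) = LNode a (filter_mset (\<lambda>c. lroot c \<noteq> m) (image_mset (del m) ts))"

primrec chs :: "nat \<Rightarrow> ltree \<Rightarrow> nat set" where
  "chs p (LNode a ts) = (if a = p then lroot ` set_mset ts else {}) \<union> \<Union> (set_mset (image_mset (chs p) ts))"

lemma count_sum_mset_img: "count (sum_mset (image_mset f M)) x = sum_mset (image_mset (\<lambda>a. count (f a) x) M)"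
  by (induction M) auto

lemma lroot_simp[simp]: "lroot (LNode a ts) = a" by (simp add: lroot_def)
lemma lchildren_simp[simp]: "lchildren (LNode a ts) = ts" by (simp add: lchildren_def)

lemma lroot_ins[simp]: "lroot (ins p m r) = lroot r" by (cases r) simp
lemma lroot_del[simp]: "lroot (del m r) = lroot r" by (cases r) simp

lemma lroot_labels: "lroot r \<in> labels r" by (cases r) simp

lemma count_ml_ins: "count (ml (ins p m r)) x = count (ml r) x + (if x = m then count (ml r) p else 0)"
proof (induction r)
  case (LNode a ts)
  have "count (sum_mset (image_mset ml (image_mset (ins p m) ts))) x
      = (\<Sum>c\<in>#ts. count (ml (ins p m c)) x)"
    by (simp add: count_sum_mset_img image_mset.compositionality o_def)
  also have "\<dots> = (\<Sum>c\<in>#ts. count (ml c) x + (if x = m then count (ml c) p else 0))"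
    by (intro arg_cong[where f=sum_mset] image_mset_cong) (simp add: LNode.IH)
  also have "\<dots> = count (sum_mset (image_mset ml ts)) x + (if x = m then count (sum_mset (image_mset ml ts)) p else 0)"
    by (simp add: count_sum_mset_img sum_mset.distrib image_mset.compositionality o_def)
  finally show ?case by auto
qed

lemma lsize_ins: "lsize (ins p m r) = lsize r + count (ml r) p"
proof -
  have "size (ml (ins p m r)) = size (ml r) + count (ml r) p"
  proof -
    have "ml (ins p m r) = ml r + replicate_mset (count (ml r) p) m"
      by (rule multiset_eqI) (simp add: count_ml_ins)
    thus ?thesis by simp
  qed
  thus ?thesis by (simp add: size_ml)
qed

lemma labels_ins: "labels (ins p m r) = labels r \<union> (if p \<in> labels r then {m} else {})"
proof -
  have "set_mset (ml (ins p m r)) = set_mset (ml r) \<union> (if p \<in># ml r then {m} else {})"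
    by (auto simp flip: count_greater_zero_iff simp: count_ml_ins split: if_splits)
  thus ?thesis by (simp add: set_ml)
qed

lemma fringe_ins: "fringe (ins p m r) = ins p m ` fringe r \<union> (if p \<in> labels r then {LNode m {#}} else {})"
  by (induction r) (auto split: if_splits)

lemma lchildren_ins: "lchildren (ins p m s) = image_mset (ins p m) (lchildren s) + (if lroot s = p then {#LNode m {#}#} else {#})"
  by (cases s) simp

lemma ins_id: "p \<notin> labels r \<Longrightarrow> ins p m r = r"
  by (induction r) (auto intro: multiset.map_ident_strong)

lemma del_id: "m \<notin> labels r \<Longrightarrow> del m r = r"
proof (induction r)
  case (LNode a ts)
  have "image_mset (del m) ts = ts"
    using LNode by (auto intro: multiset.map_ident_strong)
  moreover have "filter_mset (\<lambda>c. lroot c \<noteq> m) ts = ts"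
    using LNode.prems by (auto simp: filter_mset_eq_conv dest!: in_diffD intro: lroot_labels)
  ultimately show ?case by simp
qed

lemma del_ins: "m \<notin> labels r \<Longrightarrow> del m (ins p m r) = r"
proof (induction r)
  case (LNode a ts)
  have "image_mset (del m) (image_mset (ins p m) ts) = ts"
    using LNode by (auto simp: image_mset.compositionality o_def intro: multiset.map_ident_strong)
  moreover have "filter_mset (\<lambda>c. lroot c \<noteq> m) ts = ts"
    using LNode.prems by (auto simp: filter_mset_eq_conv dest!: in_diffD intro: lroot_labels)
  ultimately show ?case by simp
qed

lemma chs_sub: "chs q r \<subseteq> labels r"
  by (induction r) (auto intro: lroot_labels)

lemma chs_ins: "m \<notin> labels r \<Longrightarrow> m \<in> chs q (ins p m r) \<longleftrightarrow> (q = p \<and> p \<in> labels r)"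
proof (induction r)
  case (LNode a ts)
  have r1: "m \<notin> lroot ` set_mset ts" using LNode.prems by (auto intro: lroot_labels)
  have r2: "\<And>c. c \<in># ts \<Longrightarrow> m \<in> chs q (ins p m c) \<longleftrightarrow> (q = p \<and> p \<in> labels c)"
    using LNode by auto
  show ?case using r1 r2 by (auto simp: image_image)
qed

lemma ins_inj:
  assumes "m \<notin> labels r" "m \<notin> labels r'" "p \<in> labels r" "p' \<in> labels r'" "ins p m r = ins p' m r'"
  shows "r = r' \<and> p = p'"
proof
  show "r = r'" using assms del_ins by metis
  have "m \<in> chs p (ins p m r)" using assms chs_ins by blast
  hence "m \<in> chs p (ins p' m r')" using assms by simp
  thus "p = p'" using chs_ins assms by blast
qed

lemma increasing_ins:
  assumes "increasing r" "p \<in> labels r" "\<forall>x\<in>labels r. x < m"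
  shows "increasing (ins p m r)"
  unfolding increasing_def
proof (intro ballI)
  fix s' c' assume s': "s' \<in> fringe (ins p m r)" and c': "c' \<in># lchildren s'"
  show "lroot s' < lroot c'"
  proof (cases "s' = LNode m {#}")
    case True thus ?thesis using c' by simp
  next
    case False
    then obtain s where s: "s \<in> fringe r" "s' = ins p m s" using s' by (auto simp: fringe_ins split: if_splits)
    from c' s have "c' \<in># image_mset (ins p m) (lchildren s) \<or> (lroot s = p \<and> c' = LNode m {#})"
      by (auto simp: lchildren_ins split: if_splits)
    thus ?thesis
    proof
      assume "c' \<in># image_mset (ins p m) (lchildren s)"
      then obtain c where "c \<in># lchildren s" "c' = ins p m c" by auto
      thus ?thesis using assms(1) s unfolding increasing_def by auto
    next
      assume "lroot s = p \<and> c' = LNode m {#}"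
      thus ?thesis using s assms by simp
    qed
  qed
qed

lemma increasing_ins_rev:
  assumes "increasing (ins p m r)" shows "increasing r"
  unfolding increasing_def
proof (intro ballI)
  fix s c assume s: "s \<in> fringe r" and c: "c \<in># lchildren s"
  have "ins p m s \<in> fringe (ins p m r)" using s by (simp add: fringe_ins)
  moreover have "ins p m c \<in># lchildren (ins p m s)" using c by (simp add: lchildren_ins)
  ultimately have "lroot (ins p m s) < lroot (ins p m c)" using assms unfolding increasing_def by blast
  thus "lroot s < lroot c" by simp
qed


lemma ins_del_surj:
  "dl r \<Longrightarrow> m \<in> labels r \<Longrightarrow> lroot r \<noteq> m \<Longrightarrow> (\<forall>s\<in>fringe r. lroot s = m \<longrightarrow> lchildren s = {#})
   \<Longrightarrow> \<exists>p\<in>labels r. p \<noteq> m \<and> r = ins p m (del m r)"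
proof (induction r)
  case (LNode a ts)
  have am: "a \<noteq> m" using LNode.prems by simp
  have other: "\<And>c x. c \<in># ts \<Longrightarrow> x \<in># ts \<Longrightarrow> x \<noteq> c \<Longrightarrow> labels c \<inter> labels x = {}"
  proof -
    fix c x assume "c \<in># ts" "x \<in># ts" "x \<noteq> c"
    hence "x \<in># ts - {#c#}" by (simp add: in_diff_count)
    thus "labels c \<inter> labels x = {}" using dl_disj[OF LNode.prems(1) \<open>c \<in># ts\<close>] by blast
  qed
  have anot: "\<And>x. x \<in># ts \<Longrightarrow> a \<notin> labels x" using dl_root_notin[OF LNode.prems(1)] by blast
  show ?case
  proof (cases "\<exists>c\<in>#ts. lroot c = m")
    case True
    then obtain c where c: "c \<in># ts" "lroot c = m" by blast
    have "c \<in> fringe (LNode a ts)" using c fringe_self fringe_child by blast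
    hence "lchildren c = {#}" using LNode.prems c by blast
    hence cc: "c = LNode m {#}" using c by (cases c) simp
    have mc: "m \<in> labels c" using cc by simp
    have fix1: "\<And>x. x \<in># ts \<Longrightarrow> del m x = x"
    proof -
      fix x assume x: "x \<in># ts"
      show "del m x = x"
      proof (cases "x = c")
        case True thus ?thesis using cc by simp
      next
        case False thus ?thesis using other[OF c(1) x] mc by (intro del_id) blast
      qed
    qed
    have fix2: "\<And>x. x \<in># ts \<Longrightarrow> ins a m x = x" using anot ins_id by blast
    let ?F = "filter_mset (\<lambda>x. lroot x = m) ts"
    have F: "?F = {#c#}"
    proof (rule ccontr)
      assume ne: "?F \<noteq> {#c#}"
      have cF: "c \<in># ?F" using c by simp
      hence FF: "?F = add_mset c (?F - {#c#})" by simp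
      have "?F - {#c#} \<noteq> {#}" using ne FF by auto
      then obtain d where d: "d \<in># ?F - {#c#}" by blast
      hence dF: "d \<in># ?F" by (meson in_diffD)
      hence dts: "d \<in># ts" by simp
      show False
      proof (cases "d = c")
        case False
        have "m \<in> labels d" using dF lroot_labels by fastforce
        thus False using other[OF c(1) dts False] mc by auto
      next
        case True
        hence "c \<in># ?F - {#c#}" using d by simp
        hence "count (?F - {#c#}) c > 0" by (simp only: count_greater_zero_iff)
        hence "count ?F c \<ge> 2" by (simp only: count_diff count_single) simp
        hence "count ts c \<ge> 2" using c by simp
        hence "c \<in># ts - {#c#}" by (simp add: in_diff_count)
        thus False using dl_disj[OF LNode.prems(1) c(1)] mc by blast
      qed
    qed
    have "filter_mset (\<lambda>x. lroot x \<noteq> m) (image_mset (del m) ts) = filter_mset (\<lambda>x. lroot x \<noteq> m) ts"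
      using fix1 by (simp add: multiset.map_ident_strong)
    moreover have "image_mset (ins a m) (filter_mset (\<lambda>x. lroot x \<noteq> m) ts) = filter_mset (\<lambda>x. lroot x \<noteq> m) ts"
      using fix2 by (auto intro: multiset.map_ident_strong)
    moreover have "filter_mset (\<lambda>x. lroot x \<noteq> m) ts + {#c#} = ts"
      using multiset_partition[of ts "\<lambda>x. lroot x = m"] F by (simp add: add.commute)
    ultimately have "ins a m (del m (LNode a ts)) = LNode a ts" using cc by simp
    thus ?thesis using am by auto
  next
    case False
    then obtain c where c: "c \<in># ts" "m \<in> labels c" using LNode.prems am by auto
    have "lroot c \<noteq> m" using False c by blast
    moreover have "dl c" using dl_child LNode.prems c by blast
    moreover have "\<forall>s\<in>fringe c. lroot s = m \<longrightarrow> lchildren s = {#}"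
      using LNode.prems(4) c fringe_child by blast
    ultimately obtain p where p: "p \<in> labels c" "p \<noteq> m" "c = ins p m (del m c)"
      using LNode.IH c by blast
    have ap: "a \<noteq> p" using anot c p by blast
    have fx: "\<And>x. x \<in># ts \<Longrightarrow> ins p m (del m x) = x"
    proof -
      fix x assume x: "x \<in># ts"
      show "ins p m (del m x) = x"
      proof (cases "x = c")
        case True thus ?thesis using p by simp
      next
        case False
        hence "m \<notin> labels x" "p \<notin> labels x" using other[OF c(1) x] c p by blast+
        thus ?thesis by (simp add: del_id ins_id)
      qed
    qed
    have "filter_mset (\<lambda>x. lroot x \<noteq> m) (image_mset (del m) ts) = image_mset (del m) ts"
      using False by (auto simp: filter_mset_eq_conv dest!: in_diffD)
    hence "ins p m (del m (LNode a ts)) = LNode a (image_mset (ins p m) (image_mset (del m) ts))"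
      using ap by simp
    also have "\<dots> = LNode a ts" using fx
      by (simp add: image_mset.compositionality o_def multiset.map_ident_strong)
    finally have eq: "ins p m (del m (LNode a ts)) = LNode a ts" .
    have "p \<in> labels (LNode a ts)" using p c by auto
    thus ?thesis using eq p(2) by (intro bexI[of _ p]) auto
  qed
qed

lemma count_dl: "dl r \<Longrightarrow> count (ml r) p = (if p \<in> labels r then 1 else 0)"
proof -
  assume d: "dl r"
  show ?thesis
  proof (cases "p \<in> labels r")
    case True
    hence c0: "count (ml r) p > 0" by (simp flip: set_ml)
    have c1: "count (ml r) p \<le> 1" using d unfolding dl_def by blast
    have "count (ml r) p = 1" using c0 c1 by linarith
    thus ?thesis using True by simp
  next
    case False thus ?thesis by (simp flip: set_ml add: not_in_iff)
  qed
qed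

lemma dl_card: "dl r \<Longrightarrow> card (labels r) = lsize r"
proof -
  assume d: "dl r"
  have "size (ml r) = (\<Sum>x\<in>set_mset (ml r). count (ml r) x)"
    by (simp add: size_multiset_overloaded_eq)
  also have "\<dots> = (\<Sum>x\<in>set_mset (ml r). 1)"
    using count_dl[OF d] by (intro sum.cong) (auto simp: set_ml)
  finally show ?thesis by (simp add: size_ml set_ml)
qed

lemma lsize_fringe: "s \<in> fringe r \<Longrightarrow> lsize s \<le> lsize r"
  by (metis ml_fringe size_ml size_mset_mono)

lemma finite_fringe: "finite (fringe r)"
  by (induction r) auto

lemma rec_ins:
  assumes "recursive_tree n r" "p \<in> {1..n}"
  shows "recursive_tree (Suc n) (ins p (Suc n) r)"
proof -
  have d: "dl r" using rec_dl assms(1) by blast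
  have pl: "p \<in> labels r" using assms unfolding recursive_tree_def by auto
  have "lsize (ins p (Suc n) r) = Suc n"
    using assms(1) count_dl[OF d, of p] pl by (simp add: lsize_ins recursive_tree_def)
  moreover have "labels (ins p (Suc n) r) = {1..Suc n}"
    using assms(1) pl by (auto simp: labels_ins recursive_tree_def)
  moreover have "increasing (ins p (Suc n) r)"
    using assms(1) pl by (intro increasing_ins) (auto simp: recursive_tree_def)
  ultimately show ?thesis by (simp add: recursive_tree_def)
qed

lemma child_in_fringe: "s \<in> fringe r \<Longrightarrow> c \<in># lchildren s \<Longrightarrow> c \<in> fringe r"
  by (cases s) (use fringe_trans fringe_self in fastforce)

lemma rec_surj:
  assumes "recursive_tree (Suc n) r'" "n \<ge> 1"
  shows "\<exists>r p. recursive_tree n r \<and> p \<in> {1..n} \<and> r' = ins p (Suc n) r"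
proof -
  let ?m = "Suc n"
  have d: "dl r'" using rec_dl assms(1) by blast
  have L: "labels r' = {1..?m}" "lsize r' = ?m" "increasing r'" using assms(1) by (auto simp: recursive_tree_def)
  have leaf: "\<forall>s\<in>fringe r'. lroot s = ?m \<longrightarrow> lchildren s = {#}"
  proof (intro ballI impI)
    fix s assume s: "s \<in> fringe r'" "lroot s = ?m"
    show "lchildren s = {#}"
    proof (rule ccontr)
      assume "lchildren s \<noteq> {#}"
      then obtain c where c: "c \<in># lchildren s" by blast
      have "lroot s < lroot c" using L(3) s c unfolding increasing_def by blast
      moreover have "lroot c \<in> labels r'" using child_in_fringe[OF s(1) c] labels_fringe lroot_labels by blast
      ultimately show False using L(1) s(2) by auto
    qed
  qed
  have root: "lroot r' \<noteq> ?m"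
  proof
    assume "lroot r' = ?m"
    hence "lchildren r' = {#}" using leaf fringe_self by blast
    hence "lsize r' = 1" by (cases r') simp
    thus False using L(2) assms(2) by simp
  qed
  have "?m \<in> labels r'" using L by simp
  then obtain p where p: "p \<in> labels r'" "p \<noteq> ?m" "r' = ins p ?m (del ?m r')"
    using ins_del_surj[OF d _ root leaf] by blast
  define r where "r = del ?m r'"
  have eq: "r' = ins p ?m r" using p r_def by simp
  have lab: "labels r' = labels r \<union> (if p \<in> labels r then {?m} else {})"
    using eq labels_ins by simp
  have pr: "p \<in> labels r" using lab p by (auto split: if_splits)
  have c1: "count (ml r') ?m = count (ml r) ?m + count (ml r) p" using eq count_ml_ins by simp
  have "count (ml r) p \<ge> 1" using pr by (simp flip: set_ml)
  moreover have "count (ml r') ?m \<le> 1" using d dl_def by blast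
  ultimately have "count (ml r) ?m = 0" "count (ml r) p = 1" using c1 by linarith+
  hence mnot: "?m \<notin> labels r" by (simp flip: set_ml add: count_eq_zero_iff)
  have "labels r = labels r' - {?m}" using lab pr mnot by auto
  also have "\<dots> = {1..n}"
  proof -
    have "{1..Suc n} - {Suc n} = {1..n}" by auto
    thus ?thesis using L(1) by simp
  qed
  finally have "labels r = {1..n}" .
  moreover have "lsize r = n" using eq L(2) \<open>count (ml r) p = 1\<close> by (simp add: lsize_ins)
  moreover have "increasing r" using eq L(3) increasing_ins_rev by blast
  ultimately have "recursive_tree n r" by (simp add: recursive_tree_def)
  moreover have "p \<in> {1..n}" using pr \<open>labels r = {1..n}\<close> by simp
  ultimately show ?thesis using eq by blast
qed


abbreviation RT :: "nat \<Rightarrow> ltree set" where "RT n \<equiv> {r. recursive_tree n r}"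

lemma RT0: "RT 0 = {}"
proof -
  have "\<And>r. lsize r \<noteq> 0" using lsize_pos by (metis not_one_le_zero)
  thus ?thesis by (auto simp: recursive_tree_def)
qed

lemma lsize1: "lsize r = 1 \<Longrightarrow> \<exists>a. r = LNode a {#}"
proof (cases r)
  case (LNode a ts)
  assume "lsize r = 1"
  hence "sum_mset (image_mset lsize ts) = 0" using LNode by simp
  hence "ts = {#}" using lsize_pos
    by (metis le_zero_eq one_neq_zero sum_mset_0_iff image_mset_is_empty_iff multiset_nonemptyE
          image_eqI set_image_mset)
  thus ?thesis using LNode by blast
qed

lemma RT1: "RT 1 = {LNode 1 {#}}"
proof
  show "RT 1 \<subseteq> {LNode 1 {#}}"
  proof
    fix r assume "r \<in> RT 1"
    hence r: "lsize r = 1" "labels r = {1}" by (auto simp: recursive_tree_def)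
    then obtain a where "r = LNode a {#}" using lsize1 by blast
    thus "r \<in> {LNode 1 {#}}" using r by simp
  qed
next
  show "{LNode 1 {#}} \<subseteq> RT 1" by (simp add: recursive_tree_def increasing_def)
qed

definition insf :: "nat \<Rightarrow> ltree \<times> nat \<Rightarrow> ltree" where
  "insf n = (\<lambda>(r,p). ins p (Suc n) r)"

lemma RT_Suc: "n \<ge> 1 \<Longrightarrow> RT (Suc n) = insf n ` (RT n \<times> {1..n})"
proof
  assume n: "n \<ge> 1"
  show "RT (Suc n) \<subseteq> insf n ` (RT n \<times> {1..n})"
  proof
    fix r' assume "r' \<in> RT (Suc n)"
    then obtain r p where "recursive_tree n r" "p \<in> {1..n}" "r' = ins p (Suc n) r"
      using rec_surj n by blast
    thus "r' \<in> insf n ` (RT n \<times> {1..n})" unfolding insf_def by force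
  qed
next
  show "insf n ` (RT n \<times> {1..n}) \<subseteq> RT (Suc n)"
    unfolding insf_def using rec_ins by auto
qed

lemma inj_insf: "inj_on (insf n) (RT n \<times> {1..n})"
proof (rule inj_onI)
  fix x y assume x: "x \<in> RT n \<times> {1..n}" and y: "y \<in> RT n \<times> {1..n}" and e: "insf n x = insf n y"
  obtain r p r' p' where xy: "x = (r,p)" "y = (r',p')" by fastforce
  have "Suc n \<notin> labels r" "Suc n \<notin> labels r'" "p \<in> labels r" "p' \<in> labels r'"
    using x y xy by (auto simp: recursive_tree_def)
  moreover have "ins p (Suc n) r = ins p' (Suc n) r'" using e xy by (simp add: insf_def)
  ultimately show "x = y" using ins_inj xy by blast
qed

lemma finite_RT: "finite (RT n)"
proof (induction n)
  case 0 thus ?case by (simp add: RT0)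
next
  case (Suc n)
  show ?case
  proof (cases "n = 0")
    case True thus ?thesis using RT1 by simp
  next
    case False thus ?thesis using RT_Suc[of n] Suc by simp
  qed
qed

lemma card_RT_Suc: "n \<ge> 1 \<Longrightarrow> card (RT (Suc n)) = card (RT n) * n"
  using RT_Suc card_image[OF inj_insf] by (simp add: card_cartesian_product)

lemma card_RT: "n \<ge> 1 \<Longrightarrow> card (RT n) = fact (n - 1)"
proof (induction n rule: nat_induct_at_least)
  case base thus ?case using RT1 by simp
next
  case (Suc n)
  have "fact n = n * fact (n - 1)" using Suc.hyps by (simp add: fact_reduce)
  thus ?case using card_RT_Suc[of n] Suc by simp
qed

definition FC :: "nat \<Rightarrow> ltree \<Rightarrow> nat" where
  "FC k r = card {s\<in>fringe r. lsize s = k}"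

definition EC :: "nat \<Rightarrow> nat \<Rightarrow> nat" where
  "EC n k = (\<Sum>r\<in>RT n. FC k r)"

lemma card_swap:
  assumes "finite P" "finite S"
  shows "(\<Sum>p\<in>P. card {s\<in>S. Q p s}) = (\<Sum>s\<in>S. card {p\<in>P. Q p s})"
proof -
  have "\<And>p. card {s\<in>S. Q p s} = (\<Sum>s\<in>S. if Q p s then 1 else 0)"
    by (subst card_eq_sum) (rule sum.inter_filter[OF assms(2)])
  moreover have "\<And>s. card {p\<in>P. Q p s} = (\<Sum>p\<in>P. if Q p s then 1 else 0)"
    by (subst card_eq_sum) (rule sum.inter_filter[OF assms(1)])
  ultimately show ?thesis using sum.swap by simp
qed

lemma FC_ins:
  assumes r: "recursive_tree n r" and p: "p \<in> {1..n}"
  shows "FC k (ins p (Suc n) r) \<le> card {s\<in>fringe r. lsize s = k \<and> p \<notin> labels s}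
           + card {s\<in>fringe r. Suc (lsize s) = k \<and> p \<in> labels s} + (if k = 1 then 1 else 0)"
proof -
  let ?A = "{s\<in>fringe r. lsize s = k \<and> p \<notin> labels s}"
  let ?B = "{s\<in>fringe r. Suc (lsize s) = k \<and> p \<in> labels s}"
  let ?L = "(if k = 1 then {LNode (Suc n) {#}} else {})"
  have d: "dl r" using rec_dl r by blast
  have sub: "{s'\<in>fringe (ins p (Suc n) r). lsize s' = k} \<subseteq> ins p (Suc n) ` (?A \<union> ?B) \<union> ?L"
  proof
    fix s' assume s': "s' \<in> {s'\<in>fringe (ins p (Suc n) r). lsize s' = k}"
    show "s' \<in> ins p (Suc n) ` (?A \<union> ?B) \<union> ?L"
    proof (cases "s' \<in> ins p (Suc n) ` fringe r")
      case True
      then obtain s where s: "s \<in> fringe r" "s' = ins p (Suc n) s" by blast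
      have "dl s" using dl_fringe d s by blast
      hence "lsize s' = lsize s + (if p \<in> labels s then 1 else 0)"
        using s lsize_ins count_dl by simp
      hence "s \<in> ?A \<union> ?B" using s s' by (auto split: if_splits)
      thus ?thesis using s by blast
    next
      case False
      hence "s' = LNode (Suc n) {#}" using s' by (auto simp: fringe_ins split: if_splits)
      thus ?thesis using s' by auto
    qed
  qed
  have fin: "finite (?A \<union> ?B)" using finite_fringe by auto
  have "FC k (ins p (Suc n) r) \<le> card (ins p (Suc n) ` (?A \<union> ?B) \<union> ?L)"
    unfolding FC_def using sub fin by (intro card_mono) auto
  also have "\<dots> \<le> card (ins p (Suc n) ` (?A \<union> ?B)) + card ?L" by (rule card_Un_le)
  also have "\<dots> \<le> card (?A \<union> ?B) + card ?L" using card_image_le[OF fin, of "ins p (Suc n)"] by linarith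
  also have "\<dots> \<le> card ?A + card ?B + card ?L" using card_Un_le by auto
  finally have "FC k (ins p (Suc n) r) \<le> card ?A + card ?B + card ?L" .
  moreover have "card ?L = (if k = 1 then 1 else 0)" by simp
  ultimately show ?thesis by linarith
qed

lemma fringe_rec_labels:
  assumes "recursive_tree n r" "s \<in> fringe r"
  shows "labels s \<subseteq> {1..n}" "card (labels s) = lsize s"
  using assms labels_fringe dl_card dl_fringe rec_dl unfolding recursive_tree_def by blast+

lemma sumA:
  assumes r: "recursive_tree n r"
  shows "(\<Sum>p\<in>{1..n}. card {s\<in>fringe r. lsize s = k \<and> p \<notin> labels s}) = (n - k) * FC k r"
proof -
  have "(\<Sum>p\<in>{1..n}. card {s\<in>fringe r. lsize s = k \<and> p \<notin> labels s})
      = (\<Sum>s\<in>fringe r. card {p\<in>{1..n}. lsize s = k \<and> p \<notin> labels s})"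
    using finite_fringe by (intro card_swap) auto
  also have "\<dots> = (\<Sum>s\<in>fringe r. if lsize s = k then n - k else 0)"
  proof (intro sum.cong refl)
    fix s assume s: "s \<in> fringe r"
    show "card {p\<in>{1..n}. lsize s = k \<and> p \<notin> labels s} = (if lsize s = k then n - k else 0)"
    proof (cases "lsize s = k")
      case True
      have "{p\<in>{1..n}. lsize s = k \<and> p \<notin> labels s} = {1..n} - labels s" using True by auto
      moreover have "card ({1..n} - labels s) = n - k"
        using fringe_rec_labels[OF r s] True by (simp add: card_Diff_subset finite_subset)
      ultimately show ?thesis using True by simp
    qed simp
  qed
  also have "\<dots> = (n - k) * FC k r"
    unfolding FC_def using finite_fringe by (simp add: sum.inter_filter[symmetric])
  finally show ?thesis .
qed

lemma sumB:
  assumes r: "recursive_tree n r" and k: "k \<ge> 1"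
  shows "(\<Sum>p\<in>{1..n}. card {s\<in>fringe r. Suc (lsize s) = k \<and> p \<in> labels s}) = (k - 1) * FC (k - 1) r"
proof -
  have "(\<Sum>p\<in>{1..n}. card {s\<in>fringe r. Suc (lsize s) = k \<and> p \<in> labels s})
      = (\<Sum>s\<in>fringe r. card {p\<in>{1..n}. Suc (lsize s) = k \<and> p \<in> labels s})"
    using finite_fringe by (intro card_swap) auto
  also have "\<dots> = (\<Sum>s\<in>fringe r. if lsize s = k - 1 then k - 1 else 0)"
  proof (intro sum.cong refl)
    fix s assume s: "s \<in> fringe r"
    show "card {p\<in>{1..n}. Suc (lsize s) = k \<and> p \<in> labels s} = (if lsize s = k - 1 then k - 1 else 0)"
    proof (cases "lsize s = k - 1")
      case True
      have "{p\<in>{1..n}. Suc (lsize s) = k \<and> p \<in> labels s} = labels s"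
        using True k fringe_rec_labels[OF r s] by auto
      thus ?thesis using fringe_rec_labels[OF r s] True by simp
    next
      case False
      hence "{p\<in>{1..n}. Suc (lsize s) = k \<and> p \<in> labels s} = {}" using k by auto
      thus ?thesis using False by simp
    qed
  qed
  also have "\<dots> = (k - 1) * FC (k - 1) r"
    unfolding FC_def using finite_fringe by (simp add: sum.inter_filter[symmetric])
  finally show ?thesis .
qed

lemma EC_rec:
  assumes n: "n \<ge> 1" and k: "k \<ge> 1"
  shows "EC (Suc n) k \<le> (n - k) * EC n k + (k - 1) * EC n (k - 1) + (if k = 1 then n * card (RT n) else 0)"
proof -
  have "EC (Suc n) k = (\<Sum>x\<in>RT n \<times> {1..n}. FC k (insf n x))"
    unfolding EC_def RT_Suc[OF n] by (rule sum.reindex[OF inj_insf, unfolded o_def])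
  also have "\<dots> = (\<Sum>r\<in>RT n. \<Sum>p\<in>{1..n}. FC k (ins p (Suc n) r))"
    unfolding insf_def by (simp add: sum.cartesian_product split_def)
  also have "\<dots> \<le> (\<Sum>r\<in>RT n. (n - k) * FC k r + (k - 1) * FC (k - 1) r + (if k = 1 then n else 0))"
  proof (rule sum_mono)
    fix r assume r: "r \<in> RT n"
    have "(\<Sum>p\<in>{1..n}. FC k (ins p (Suc n) r)) \<le> (\<Sum>p\<in>{1..n}.
          card {s\<in>fringe r. lsize s = k \<and> p \<notin> labels s}
           + card {s\<in>fringe r. Suc (lsize s) = k \<and> p \<in> labels s} + (if k = 1 then 1 else 0))"
      using FC_ins r by (intro sum_mono) auto
    also have "\<dots> = (n - k) * FC k r + (k - 1) * FC (k - 1) r + (if k = 1 then n else 0)"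
      using sumA sumB r k by (simp add: sum.distrib)
    finally show "(\<Sum>p\<in>{1..n}. FC k (ins p (Suc n) r)) \<le> (n - k) * FC k r + (k - 1) * FC (k - 1) r + (if k = 1 then n else 0)" .
  qed
  also have "\<dots> = (n - k) * EC n k + (k - 1) * EC n (k - 1) + (if k = 1 then n * card (RT n) else 0)"
    unfolding EC_def by (simp add: sum.distrib sum_distrib_left)
  finally show ?thesis .
qed

lemma FC_big: "lsize r < k \<Longrightarrow> FC k r = 0"
  unfolding FC_def using lsize_fringe by (metis (mono_tags, lifting) Collect_empty_eq card.empty
      not_le)

lemma EC_big: "n < k \<Longrightarrow> EC n k = 0"
  unfolding EC_def by (intro sum.neutral) (auto simp: recursive_tree_def FC_big)


definition beta :: "nat \<Rightarrow> nat \<Rightarrow> real" where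
  "beta n k = (if k < n then real n / (real k * (real k + 1)) else if k = n then 1 else 0)"

lemma EC1: "EC (Suc 0) k = (if k = 1 then 1 else 0)"
proof -
  have "{s \<in> fringe (LNode 1 {#}). lsize s = k} = (if k = 1 then {LNode 1 {#}} else {})" by auto
  thus ?thesis unfolding EC_def FC_def using RT1 by simp
qed

lemma EC_bound:
  assumes "n \<ge> 1"
  shows "k \<ge> 1 \<Longrightarrow> real (EC n k) \<le> beta n k * real (card (RT n))"
  using assms
proof (induction n arbitrary: k rule: nat_induct_at_least)
  case base
  have "card (RT (Suc 0)) = 1" using RT1 by simp
  thus ?case using base by (simp add: EC1 beta_def)
next
  case (Suc n)
  let ?C = "real (card (RT n))"
  have C': "real (card (RT (Suc n))) = real n * ?C" using card_RT_Suc[OF Suc.hyps(1)] by simp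
  have C0: "?C \<ge> 0" by simp
  have rec: "real (EC (Suc n) k) \<le> real (n - k) * real (EC n k) + real (k - 1) * real (EC n (k - 1))
      + (if k = 1 then real n * ?C else 0)"
  proof -
    have "real (EC (Suc n) k) \<le> real ((n - k) * EC n k + (k - 1) * EC n (k - 1) + (if k = 1 then n * card (RT n) else 0))"
      using EC_rec[OF Suc.hyps(1) Suc.prems] by (simp only: of_nat_le_iff)
    thus ?thesis by (cases "k = 1") (simp_all only: of_nat_add of_nat_mult if_True if_False of_nat_0, simp_all)
  qed
  consider "k \<le> n" | "k = Suc n" | "k > Suc n" by linarith
  thus ?case
  proof cases
    case 1
    have t1: "real (n - k) * real (EC n k) \<le> real (n - k) * (real n / (real k * (real k + 1))) * ?C"
    proof (cases "k < n")
      case True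
      have "real (EC n k) \<le> real n / (real k * (real k + 1)) * ?C"
        using Suc.IH[OF Suc.prems] True by (simp add: beta_def)
      hence "real (n - k) * real (EC n k) \<le> real (n - k) * (real n / (real k * (real k + 1)) * ?C)"
        by (rule mult_left_mono) simp
      thus ?thesis by (simp only: mult.assoc)
    next
      case False thus ?thesis using 1 by simp
    qed
    show ?thesis
    proof (cases "k = 1")
      case True
      have "real (EC (Suc n) k) \<le> real (n - 1) * (real n / 2) * ?C + real n * ?C"
        using rec t1 True by simp
      also have "\<dots> = (real n * (real n - 1) / 2 + real n) * ?C"
        using Suc.hyps by (simp add: of_nat_diff algebra_simps)
      also have "\<dots> = beta (Suc n) k * real (card (RT (Suc n)))"
        using True C' by (simp add: beta_def field_simps)
      finally show ?thesis .
    next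
      case False
      hence k2: "k \<ge> 2" using Suc.prems by simp
      have km: "k - 1 \<ge> 1" "k - 1 < n" using k2 1 by auto
      have "real (EC n (k - 1)) \<le> beta n (k - 1) * ?C" using Suc.IH[OF km(1)] .
      also have "beta n (k - 1) = real n / (real (k - 1) * (real (k - 1) + 1))"
        using km(2) by (simp add: beta_def)
      finally have "real (EC n (k - 1)) \<le> real n / (real (k - 1) * (real (k - 1) + 1)) * ?C" .
      hence t2: "real (k - 1) * real (EC n (k - 1)) \<le> real n / real k * ?C"
        using k2 by (simp add: of_nat_diff field_simps mult_left_mono)
      have eqk: "(real n - real k) * (real n / (real k * (real k + 1))) + real n / real k
           = (real n + 1) / (real k * (real k + 1)) * real n"
      proof -
        have kp: "real k > 0" using k2 by simp
        have "(real n - real k) * (real n / (real k * (real k + 1))) + real n / real k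
             = ((real n - real k) * real n + real n * (real k + 1)) / (real k * (real k + 1))"
        proof -
          have "real n / real k = real n * (real k + 1) / (real k * (real k + 1))" using kp by simp
          thus ?thesis by (simp add: add_divide_distrib)
        qed
        also have "(real n - real k) * real n + real n * (real k + 1) = (real n + 1) * real n"
          by (simp add: algebra_simps)
        finally show ?thesis by simp
      qed
      have "real (EC (Suc n) k) \<le> real (n - k) * (real n / (real k * (real k + 1))) * ?C + real n / real k * ?C"
        using rec t1 t2 False by simp
      also have "\<dots> = (real n - real k) * (real n / (real k * (real k + 1))) * ?C + real n / real k * ?C"
        using 1 by (simp add: of_nat_diff)
      also have "\<dots> = ((real n - real k) * (real n / (real k * (real k + 1))) + real n / real k) * ?C"
        by (simp add: algebra_simps)
      also have "\<dots> = (real n + 1) / (real k * (real k + 1)) * real n * ?C" using eqk by simp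
      also have "(real n + 1) / (real k * (real k + 1)) * real n * ?C = beta (Suc n) k * real (card (RT (Suc n)))"
        using 1 k2 C' by (simp add: beta_def)
      finally show ?thesis .
    qed
  next
    case 2
    have "real (EC n n) \<le> ?C" using Suc.IH[of n] Suc.hyps by (simp add: beta_def)
    hence a: "real n * real (EC n n) \<le> real n * ?C" by (rule mult_left_mono) simp
    have "real (EC (Suc n) k) \<le> real n * real (EC n n)" using rec 2 Suc.hyps by simp
    hence "real (EC (Suc n) k) \<le> real n * ?C" using a by linarith
    thus ?thesis using 2 C' by (simp add: beta_def)
  next
    case 3
    thus ?thesis using EC_big[of "Suc n" k] by (simp add: beta_def)
  qed
qed


lemma psize_pos: "psize t \<ge> 1"
  by (cases t) auto

lemma size_le_sum_mset: "(\<And>x. x \<in># M \<Longrightarrow> f x \<ge> (1::nat)) \<Longrightarrow> size M \<le> sum_mset (image_mset f M)"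
proof (induction M)
  case (add x M)
  have "f x \<ge> 1" using add.prems by simp
  moreover have "size M \<le> sum_mset (image_mset f M)" using add by simp
  ultimately show ?case by simp
qed simp

lemma elem_le_sum_mset: "x \<in># M \<Longrightarrow> (f x::nat) \<le> sum_mset (image_mset f M)"
  by (metis image_mset_add_mset insert_DiffM le_add1 sum_mset.insert)

lemma finite_psize_le: "finite {t. psize t \<le> k}"
proof (induction k)
  case 0
  have "\<And>t. \<not> psize t \<le> 0" using psize_pos by (simp add: Suc_le_eq)
  hence e: "{t. psize t \<le> 0} = {}" by blast
  show ?case by (simp only: e finite.emptyI)
next
  case (Suc k)
  let ?A = "{t. psize t \<le> k}"
  let ?MS = "\<Union>j\<in>{..k}. multisets_of_size ?A j"
  have fin: "finite ?MS" using Suc by auto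
  have "{t. psize t \<le> Suc k} \<subseteq> PNode ` ?MS"
  proof
    fix t assume t: "t \<in> {t. psize t \<le> Suc k}"
    obtain M where M: "t = PNode M" by (cases t)
    have s: "sum_mset (image_mset psize M) \<le> k" using t M by simp
    have "size M \<le> k" using size_le_sum_mset[of M psize] psize_pos s by fastforce
    moreover have "set_mset M \<subseteq> ?A" using elem_le_sum_mset[of _ M psize] s by fastforce
    ultimately show "t \<in> PNode ` ?MS" using M by (auto simp: multisets_of_size_def)
  qed
  thus ?case using fin finite_subset by blast
qed

lemma finite_psize_eq: "finite {t. psize t = k}"
  using finite_psize_le[of k] by (rule finite_subset[rotated]) auto

abbreviation pa :: "nat \<Rightarrow> nat" where "pa k \<equiv> card {t. psize t = k}"

lemma pa_mono1: "pa k \<le> pa (Suc k)"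
proof -
  have "inj_on (\<lambda>t. PNode {#t#}) {t. psize t = k}" by (auto intro: inj_onI)
  moreover have "(\<lambda>t. PNode {#t#}) ` {t. psize t = k} \<subseteq> {t. psize t = Suc k}" by auto
  ultimately show ?thesis using finite_psize_eq card_inj_on_le by blast
qed

lemma pa_mult: "m < n \<Longrightarrow> pa m * pa n \<le> pa (Suc (m + n))"
proof -
  assume mn: "m < n"
  let ?f = "\<lambda>(s,t). PNode {#s, t#}"
  have "inj_on ?f ({t. psize t = m} \<times> {t. psize t = n})"
  proof (rule inj_onI)
    fix x y assume x: "x \<in> {t. psize t = m} \<times> {t. psize t = n}" and y: "y \<in> {t. psize t = m} \<times> {t. psize t = n}"
      and e: "?f x = ?f y"
    obtain s t s' t' where xy: "x = (s,t)" "y = (s',t')" by fastforce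
    have e2: "add_mset s {#t#} = add_mset s' {#t'#}" using e xy by simp
    have "psize s = m" "psize t = n" "psize s' = m" "psize t' = n" using x y xy by auto
    hence "s \<noteq> t'" using mn by auto
    have "t \<in># add_mset s' {#t'#}" using e2 by (metis add_mset_commute union_single_eq_member)
    hence tt: "t = t'" using \<open>psize t = n\<close> \<open>psize s' = m\<close> mn by auto
    hence "add_mset t {#s#} = add_mset t {#s'#}" using e2 by (simp add: add_mset_commute)
    hence "s = s'" by simp
    thus "x = y" using tt xy by simp
  qed
  moreover have "?f ` ({t. psize t = m} \<times> {t. psize t = n}) \<subseteq> {t. psize t = Suc (m + n)}" by auto
  ultimately have "card ({t. psize t = m} \<times> {t. psize t = n}) \<le> pa (Suc (m + n))"
    using finite_psize_eq card_inj_on_le by blast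
  thus ?thesis by (simp add: card_cartesian_product)
qed

lemma pa_pow: "j \<ge> 1 \<Longrightarrow> pa k ^ j \<le> pa (j * Suc k)"
proof (induction j rule: nat_induct_at_least)
  case base thus ?case using pa_mono1 by simp
next
  case (Suc j)
  have "pa k ^ Suc j = pa k * pa k ^ j" by simp
  also have "\<dots> \<le> pa k * pa (j * Suc k)" using Suc.IH by simp
  also have "\<dots> \<le> pa (Suc (k + j * Suc k))" proof (intro pa_mult)
    have "k \<le> j * k" using Suc.hyps by simp
    moreover have "j * Suc k = j + j * k" by simp
    ultimately show "k < j * Suc k" using Suc.hyps by linarith
  qed
  also have "Suc (k + j * Suc k) = Suc j * Suc k" by simp
  finally show ?case .
qed


lemma pa_bound_r:
  assumes r: "0 < r" "ereal r < conv_radius (\<lambda>n. real (pa n))"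
  shows "real (pa k) * r ^ Suc k \<le> 1"
proof (rule ccontr)
  assume "\<not> ?thesis"
  hence q: "real (pa k) * r ^ Suc k > 1" by simp
  have "summable (\<lambda>n. real (pa n) * r ^ n)"
    using r by (intro summable_in_conv_radius) simp
  hence "(\<lambda>n. real (pa n) * r ^ n) \<longlonglongrightarrow> 0" by (rule summable_LIMSEQ_zero)
  hence "eventually (\<lambda>n. dist (real (pa n) * r ^ n) 0 < 1) sequentially"
    by (rule tendstoD) simp
  then obtain N where N: "\<And>n. n \<ge> N \<Longrightarrow> \<bar>real (pa n) * r ^ n\<bar> < 1"
    by (auto simp: eventually_sequentially)
  define j where "j = Suc N"
  have "real (pa k ^ j) \<le> real (pa (j * Suc k))"
    by (simp only: of_nat_le_iff) (rule pa_pow, simp add: j_def)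
  hence "real (pa k) ^ j \<le> real (pa (j * Suc k))" by (simp only: of_nat_power)
  hence "real (pa k) ^ j * r ^ (j * Suc k) \<le> real (pa (j * Suc k)) * r ^ (j * Suc k)"
    using r by (intro mult_right_mono) auto
  moreover have "(real (pa k) * r ^ Suc k) ^ j = real (pa k) ^ j * r ^ (j * Suc k)"
    by (simp add: power_mult_distrib power_mult[symmetric] mult.commute power_add[symmetric])
  ultimately have "(real (pa k) * r ^ Suc k) ^ j \<le> real (pa (j * Suc k)) * r ^ (j * Suc k)" by simp
  moreover have "1 \<le> (real (pa k) * r ^ Suc k) ^ j" using q by simp
  moreover have "j * Suc k \<ge> N" by (simp add: j_def)
  ultimately show False using N[of "j * Suc k"] r by auto
qed

lemma pa_bound:
  assumes s: "0 < polya_sigma"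
  shows "real (pa k) * polya_sigma ^ Suc k \<le> 1"
proof -
  let ?s = polya_sigma
  have cr: "conv_radius (\<lambda>n. real (pa n)) = ereal ?s"
    using s unfolding polya_sigma_def by (cases "conv_radius (\<lambda>n. real (pa n))") auto
  define r where "r = (\<lambda>j::nat. ?s * (1 - 1 / real (j + 2)))"
  have "\<And>j. real (pa k) * r j ^ Suc k \<le> 1"
  proof -
    fix j
    have "1 / real (j + 2) > 0" by simp
    moreover have "1 / real (j + 2) < 1" by simp
    ultimately have "0 < r j" "r j < ?s" using s unfolding r_def by (auto simp: mult_less_cancel_left1)
    thus "real (pa k) * r j ^ Suc k \<le> 1" using cr by (intro pa_bound_r) auto
  qed
  moreover have "r \<longlonglongrightarrow> ?s * (1 - 0)"
  proof -
    have "(\<lambda>j. 1 / real (j + 2)) \<longlonglongrightarrow> 0"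
      using LIMSEQ_ignore_initial_segment[OF lim_1_over_n, of 2] by simp
    thus ?thesis unfolding r_def by (intro tendsto_intros)
  qed
  hence "(\<lambda>j. real (pa k) * r j ^ Suc k) \<longlonglongrightarrow> real (pa k) * ?s ^ Suc k"
    by (auto intro!: tendsto_intros)
  ultimately show ?thesis by (intro LIMSEQ_le_const2) auto
qed


lemma psize_shape: "psize (shape s) = lsize s"
  by (induction s) (auto simp: image_mset.compositionality o_def intro!: arg_cong[where f=sum_mset] image_mset_cong)

definition gt :: "ptree \<Rightarrow> nat \<Rightarrow> real" where
  "gt t n = 1 - S_coeff t n / T_coeff n"

lemma gt_eq:
  assumes n: "n \<ge> 1"
  shows "gt t n = real (card {r\<in>RT n. has_fringe_shape t r}) / real (card (RT n))"
proof -
  let ?H = "{r\<in>RT n. has_fringe_shape t r}" and ?N = "{r\<in>RT n. \<not> has_fringe_shape t r}"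
  have fin: "finite ?H" "finite ?N" using finite_RT[of n] by auto
  have eq: "RT n = ?H \<union> ?N" by auto
  have "?H \<inter> ?N = {}" by auto
  hence c: "card (?H \<union> ?N) = card ?H + card ?N" by (rule card_Un_disjoint[OF fin(1) fin(2)])
  have cu: "card (RT n) = card ?H + card ?N" using arg_cong[where f=card, OF eq] c by linarith
  have pos: "card (RT n) > 0" using card_RT[OF n] by simp
  have S: "S_coeff t n = real (card ?N) / fact n"
    unfolding S_coeff_def egf_coeff_def by simp
  have T: "T_coeff n = real (card (RT n)) / fact n"
    unfolding T_coeff_def egf_coeff_def by simp
  have "S_coeff t n / T_coeff n = real (card ?N) / real (card (RT n))"
    unfolding S T by (simp add: field_simps)
  hence "gt t n = (real (card (RT n)) - real (card ?N)) / real (card (RT n))"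
    unfolding gt_def using pos by (simp add: field_simps)
  thus ?thesis using cu by simp
qed

lemma gt_nonneg: "n \<ge> 1 \<Longrightarrow> gt t n \<ge> 0"
  by (simp add: gt_eq)

lemma gt_le1: "n \<ge> 1 \<Longrightarrow> gt t n \<le> 1"
proof -
  assume n: "n \<ge> 1"
  have "card {r\<in>RT n. has_fringe_shape t r} \<le> card (RT n)" using finite_RT by (intro card_mono) auto
  moreover have "card (RT n) > 0" using card_RT[OF n] by simp
  ultimately show ?thesis using n by (simp add: gt_eq divide_le_eq_1)
qed

lemma sum_has_le_EC:
  "(\<Sum>t\<in>{t. psize t = k}. card {r\<in>RT n. has_fringe_shape t r}) \<le> EC n k"
proof -
  have "(\<Sum>t\<in>{t. psize t = k}. card {r\<in>RT n. has_fringe_shape t r})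
      = (\<Sum>r\<in>RT n. card {t\<in>{t. psize t = k}. has_fringe_shape t r})"
    using finite_psize_eq finite_RT by (intro card_swap)
  also have "\<dots> \<le> (\<Sum>r\<in>RT n. FC k r)"
  proof (intro sum_mono)
    fix r
    have "{t\<in>{t. psize t = k}. has_fringe_shape t r} \<subseteq> shape ` {s\<in>fringe r. lsize s = k}"
      unfolding has_fringe_shape_def using psize_shape by fastforce
    hence "card {t\<in>{t. psize t = k}. has_fringe_shape t r} \<le> card (shape ` {s\<in>fringe r. lsize s = k})"
      using finite_fringe by (intro card_mono) auto
    also have "\<dots> \<le> FC k r" unfolding FC_def using finite_fringe by (intro card_image_le) auto
    finally show "card {t\<in>{t. psize t = k}. has_fringe_shape t r} \<le> FC k r" .
  qed
  finally show ?thesis unfolding EC_def .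
qed

lemma sum_gt_E:
  assumes n: "n \<ge> 1" and k: "k \<ge> 1" "k < n"
  shows "(\<Sum>t\<in>{t. psize t = k}. gt t n) \<le> real n / (real k * (real k + 1))"
proof -
  have pos: "real (card (RT n)) > 0" using card_RT[OF n] by simp
  have "(\<Sum>t\<in>{t. psize t = k}. gt t n) = (\<Sum>t\<in>{t. psize t = k}. real (card {r\<in>RT n. has_fringe_shape t r})) / real (card (RT n))"
    using n by (simp add: gt_eq sum_divide_distrib)
  also have "\<dots> \<le> real (EC n k) / real (card (RT n))"
    using sum_has_le_EC[where k=k and n=n] pos by (intro divide_right_mono) (simp_all flip: of_nat_sum)
  also have "\<dots> \<le> beta n k"
    using EC_bound[OF n k(1)] pos by (simp add: divide_le_eq)
  also have "\<dots> = real n / (real k * (real k + 1))" using k by (simp add: beta_def)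
  finally show ?thesis .
qed

lemma sum_gt_pa:
  assumes n: "n \<ge> 1"
  shows "(\<Sum>t\<in>{t. psize t = k}. gt t n) \<le> real (pa k)"
proof -
  have "(\<Sum>t\<in>{t. psize t = k}. gt t n) \<le> (\<Sum>t\<in>{t. psize t = k}. 1)"
    using gt_le1[OF n] by (intro sum_mono) auto
  thus ?thesis by simp
qed


lemma geom_bound:
  fixes x X :: real
  assumes x: "x > 1" and X: "X \<ge> 0"
  shows "(\<Sum>k<nat \<lceil>X\<rceil>. x ^ (k + 1)) \<le> x^2 / (x - 1) * x powr X"
proof -
  let ?N = "nat \<lceil>X\<rceil>"
  have e1: "(\<Sum>k<?N. x ^ (k + 1)) = x * (\<Sum>k<?N. x ^ k)" by (simp add: sum_distrib_left)
  have "(\<Sum>k<?N. x ^ k) = (x ^ ?N - 1) / (x - 1)"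
    using x by (simp add: sum_gp_strict field_simps)
  also have "\<dots> \<le> x ^ ?N / (x - 1)" using x by (intro divide_right_mono) auto
  also have "x ^ ?N = x powr real ?N" using x by (simp add: powr_realpow)
  also have "\<dots> \<le> x powr (X + 1)"
    using x X by (intro powr_mono) linarith+
  also have "\<dots> = x * x powr X" using x by (simp add: powr_add)
  finally have "(\<Sum>k<?N. x ^ k) \<le> x * x powr X / (x - 1)" using x by (simp add: divide_right_mono)
  hence "x * (\<Sum>k<?N. x ^ k) \<le> x * (x * x powr X / (x - 1))" using x by (intro mult_left_mono) auto
  thus ?thesis using e1 by (simp add: power2_eq_square)
qed

lemma interp:
  fixes h x y :: real
  assumes "0 \<le> h" "h \<le> x" "h \<le> y"
  shows "h \<le> x powr (1/4) * y powr (3/4)"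
proof (cases "h = 0")
  case True thus ?thesis by simp
next
  case False
  hence hp: "h > 0" using assms by simp
  have "h = h powr (1/4) * h powr (3/4)" using hp by (simp flip: powr_add)
  also have "\<dots> \<le> x powr (1/4) * y powr (3/4)"
    using assms hp by (intro mult_mono powr_mono2) auto
  finally show ?thesis .
qed

lemma analytic_bound:
  fixes b L :: real and n :: nat and h :: "nat \<Rightarrow> real" and K :: "nat set"
  assumes b: "b > 1" and n: "n \<ge> 1"
    and L: "L = log b (real n)" "L \<ge> 2"
    and K: "finite K" "\<forall>k\<in>K. real k < L"
    and h0: "\<forall>k\<in>K. 0 \<le> h k"
    and hk0: "\<forall>k\<in>K. k = 0 \<longrightarrow> h k = 0"
    and h1: "\<forall>k\<in>K. k \<ge> 1 \<longrightarrow> h k \<le> b ^ (k + 1)"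
    and h2: "\<forall>k\<in>K. k \<ge> 1 \<longrightarrow> h k \<le> real n / (real k * (real k + 1))"
  shows "(\<Sum>k\<in>K. h k) \<le> b^2 / (b - 1) * sqrt (real n)
           + (b powr (1/4))^2 / (b powr (1/4) - 1) * 2 powr (3/2) * (real n / L powr (3/2))"
proof -
  define c where "c = b powr (1/4)"
  have c1: "c > 1" using b unfolding c_def by simp
  have np: "real n > 0" using n by simp
  have bL: "b powr L = real n" using b np L(1) by simp
  have hx: "\<forall>k\<in>K. h k \<le> b ^ (k + 1)"
  proof
    fix k assume k: "k \<in> K"
    show "h k \<le> b ^ (k + 1)"
    proof (cases "k = 0")
      case True thus ?thesis using hk0 k b by simp
    next
      case False thus ?thesis using h1 k by simp
    qed
  qed
  let ?P = "\<lambda>k. real k < L / 2"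
  have split: "(\<Sum>k\<in>K. h k) = (\<Sum>k\<in>K. if ?P k then h k else 0) + (\<Sum>k\<in>K. if ?P k then 0 else h k)"
    by (simp add: sum.distrib[symmetric] if_distrib) (intro sum.cong, auto)
  have p1: "(\<Sum>k\<in>K. if ?P k then h k else 0) \<le> b^2 / (b - 1) * sqrt (real n)"
  proof -
    let ?N = "nat \<lceil>L / 2\<rceil>"
    have "(\<Sum>k\<in>K. if ?P k then h k else 0) \<le> (\<Sum>k\<in>K. if ?P k then b ^ (k + 1) else 0)"
      using hx by (intro sum_mono) auto
    also have "\<dots> = (\<Sum>k\<in>{k\<in>K. ?P k}. b ^ (k + 1))"
      by (rule sum.inter_filter[OF K(1), symmetric])
    also have "\<dots> \<le> (\<Sum>k<?N. b ^ (k + 1))"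
    proof (rule sum_mono2)
      show "{k \<in> K. ?P k} \<subseteq> {..<?N}"
      proof
        fix k assume "k \<in> {k \<in> K. ?P k}"
        hence "real k < L / 2" by simp
        hence "real k < real ?N" using L(2) by linarith
        thus "k \<in> {..<?N}" by simp
      qed
    qed (use b in auto)
    also have "\<dots> \<le> b^2 / (b - 1) * b powr (L / 2)" using b L(2) by (intro geom_bound) auto
    also have "b powr (L / 2) = sqrt (real n)"
    proof -
      have "b powr (L / 2) = (b powr L) powr (1/2)" by (simp add: powr_powr)
      thus ?thesis using bL np by (simp add: powr_half_sqrt)
    qed
    finally show ?thesis .
  qed
  define D where "D = real n powr (3/4) / (L / 2) powr (3/2)"
  have Dnn: "D \<ge> 0" unfolding D_def by simp
  have p2: "(\<Sum>k\<in>K. if ?P k then 0 else h k) \<le> c^2 / (c - 1) * 2 powr (3/2) * (real n / L powr (3/2))"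
  proof -
    let ?N = "nat \<lceil>L\<rceil>"
    have each: "\<And>k. k \<in> K \<Longrightarrow> \<not> ?P k \<Longrightarrow> h k \<le> c ^ (k + 1) * D"
    proof -
      fix k assume k: "k \<in> K" and nP: "\<not> ?P k"
      have kL: "real k \<ge> L / 2" using nP by simp
      hence k1: "k \<ge> 1" using L(2) by (cases k) auto
      have hy: "h k \<le> real n / (real k * (real k + 1))" using h2 k k1 by blast
      have "h k \<le> (b ^ (k + 1)) powr (1/4) * (real n / (real k * (real k + 1))) powr (3/4)"
        using interp[OF _ _ hy] h0 hx k by blast
      also have "(b ^ (k + 1)) powr (1/4) = c ^ (k + 1)"
      proof -
        have e1: "b ^ (k + 1) = b powr (real (k + 1))" using b by (intro powr_realpow[symmetric]) simp
        have e2: "c ^ (k + 1) = c powr (real (k + 1))" using c1 by (intro powr_realpow[symmetric]) simp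
        show ?thesis unfolding e1 e2 unfolding c_def powr_powr by (simp only: mult.commute)
      qed
      also have "(real n / (real k * (real k + 1))) powr (3/4) \<le> (real n / (L / 2) ^ 2) powr (3/4)"
      proof (intro powr_mono2)
        have "(L / 2) ^ 2 \<le> real k ^ 2" using kL L(2) by (intro power_mono) auto
        also have "\<dots> \<le> real k * (real k + 1)" by (simp add: power2_eq_square algebra_simps)
        finally have "(L / 2) ^ 2 \<le> real k * (real k + 1)" .
        moreover have "(L / 2) ^ 2 > 0" using L(2) by simp
        moreover have "real k * (real k + 1) > 0" using k1 by simp
        ultimately show "real n / (real k * (real k + 1)) \<le> real n / (L / 2) ^ 2"
          using np by (intro divide_left_mono) (auto intro: mult_pos_pos)
      qed (use np in auto)
      also have "(real n / (L / 2) ^ 2) powr (3/4) = D"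
      proof -
        have e: "(L / 2) ^ 2 = (L / 2) powr (real 2)" using L(2) by (intro powr_realpow[symmetric]) simp
        have "((L / 2) ^ 2) powr (3/4) = (L / 2) powr (3/2)"
          unfolding e powr_powr by simp
        thus ?thesis unfolding D_def using np L(2) by (simp add: powr_divide)
      qed
      finally show "h k \<le> c ^ (k + 1) * D" using c1 by (simp add: mult_left_mono)
    qed
    have "(\<Sum>k\<in>K. if ?P k then 0 else h k) \<le> (\<Sum>k\<in>K. c ^ (k + 1) * D)"
      using each h0 c1 Dnn by (intro sum_mono) auto
    also have "\<dots> \<le> (\<Sum>k<?N. c ^ (k + 1) * D)"
    proof (rule sum_mono2)
      show "K \<subseteq> {..<?N}"
      proof
        fix k assume "k \<in> K"
        hence "real k < L" using K by simp
        hence "real k < real ?N" by linarith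
        thus "k \<in> {..<?N}" by simp
      qed
    qed (use c1 Dnn K in auto)
    also have "\<dots> = (\<Sum>k<?N. c ^ (k + 1)) * D" by (simp add: sum_distrib_right)
    also have "\<dots> \<le> c^2 / (c - 1) * c powr L * D"
      using c1 L(2) Dnn by (intro mult_right_mono geom_bound) auto
    also have "c powr L = real n powr (1/4)"
    proof -
      have "(b powr (1/4)) powr L = b powr (L * (1/4))" by (simp add: powr_powr mult.commute)
      also have "\<dots> = (b powr L) powr (1/4)" by (simp add: powr_powr)
      finally show ?thesis unfolding c_def using bL by simp
    qed
    also have "c^2 / (c - 1) * real n powr (1/4) * D = c^2 / (c - 1) * 2 powr (3/2) * (real n / L powr (3/2))"
    proof -
      have nn: "real n powr (1/4) * real n powr (3/4) = real n" using np by (simp flip: powr_add)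
      have Qe: "L powr (3/2) = 2 powr (3/2) * (L / 2) powr (3/2)"
      proof -
        have "L = 2 * (L / 2)" by simp
        hence "L powr (3/2) = (2 * (L / 2)) powr (3/2)" by simp
        also have "\<dots> = 2 powr (3/2) * (L / 2) powr (3/2)" by (rule powr_mult)
        finally show ?thesis .
      qed
      have t: "2 powr (3/2::real) > 0" by simp
      have "c^2 / (c - 1) * real n powr (1/4) * D = c^2 / (c - 1) * (real n powr (1/4) * real n powr (3/4)) / (L / 2) powr (3/2)"
        unfolding D_def by simp
      also have "\<dots> = c^2 / (c - 1) * real n / (L / 2) powr (3/2)" using nn by simp
      also have "\<dots> = c^2 / (c - 1) * 2 powr (3/2) * (real n / L powr (3/2))"
        unfolding Qe using t by simp
      finally show ?thesis .
    qed
    finally show ?thesis .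
  qed
  show ?thesis using split p1 p2 unfolding c_def by linarith
qed


lemma sigma_nonneg: "polya_sigma \<ge> 0"
  unfolding polya_sigma_def by (simp add: conv_radius_nonneg real_of_ereal_pos)

theorem proposition2p6:
  shows "(\<lambda>n::nat. \<Sum>t\<in>{t. psize t \<le> n \<and> real (psize t) < log (1 / polya_sigma) (real n)}.
            1 - S_coeff t n / T_coeff n)
         \<in> O(\<lambda>n::nat. real n / (log (1 / polya_sigma) (real n)) powr (3/2))"
proof -
  define b where "b = 1 / polya_sigma"
  define L where "L = (\<lambda>n::nat. log b (real n))"
  define G where "G = (\<lambda>n::nat. real n / L n powr (3/2))"
  define Sm where "Sm = (\<lambda>n::nat. \<Sum>t\<in>{t. psize t \<le> n \<and> real (psize t) < L n}. gt t n)"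
  have b0: "b \<ge> 0" using sigma_nonneg unfolding b_def by simp
  have goal: "Sm \<in> O(G)"
  proof (cases "b > 1")
    case False
    have "\<And>n. L n \<le> 0"
    proof -
      fix n
      have "ln b \<le> 0"
      proof (cases "b = 0")
        case False thus ?thesis using b0 \<open>\<not> b > 1\<close> by simp
      qed simp
      moreover have "ln (real n) \<ge> 0" by (cases n) auto
      ultimately show "L n \<le> 0" unfolding L_def log_def by (simp add: divide_nonneg_nonpos)
    qed
    hence "\<And>n. {t. psize t \<le> n \<and> real (psize t) < L n} = {}"
      by (metis (no_types, lifting) empty_Collect_eq linorder_not_le of_nat_0_le_iff order.trans)
    hence "\<And>n. Sm n = 0" unfolding Sm_def by (simp only: sum.empty)
    hence "Sm = (\<lambda>_. 0)" by auto
    thus ?thesis by simp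
  next
    case True
    note b = True
    have s0: "polya_sigma > 0" using b sigma_nonneg unfolding b_def by (cases "polya_sigma = 0") auto
    have lnb: "ln b > 0" using b by simp
    have pab: "\<And>k. real (pa k) \<le> b ^ (k + 1)"
    proof -
      fix k
      have "real (pa k) * polya_sigma ^ Suc k \<le> 1" using pa_bound[OF s0] .
      hence "real (pa k) \<le> 1 / polya_sigma ^ Suc k" using s0 by (simp add: field_simps)
      thus "real (pa k) \<le> b ^ (k + 1)" unfolding b_def by (simp add: power_one_over)
    qed
    define A1 where "A1 = b^2 / (b - 1)"
    define A2 where "A2 = (b powr (1/4))^2 / (b powr (1/4) - 1) * 2 powr (3/2)"
    have A1: "A1 \<ge> 0" unfolding A1_def using b by simp
    have "b powr (1/4) > 1" using b by simp
    hence A2: "A2 \<ge> 0" unfolding A2_def by (intro mult_nonneg_nonneg divide_nonneg_nonneg) auto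
    have ev1: "eventually (\<lambda>n::nat. n \<ge> 1) at_top" by (rule eventually_ge_at_top)
    have lim: "filterlim (\<lambda>n::nat. ln (real n)) at_top at_top" by real_asymp
    have ev2: "eventually (\<lambda>n::nat. ln (real n) \<ge> 2 * ln b) at_top"
      using lim by (simp add: filterlim_at_top)
    have o1: "(\<lambda>n::nat. ln (real n)) \<in> o(\<lambda>n. real n)" by real_asymp
    have ev3: "eventually (\<lambda>n::nat. norm (ln (real n)) \<le> ln b * norm (real n)) at_top"
      using landau_o.smallD[OF o1 lnb] .
    have o2: "(\<lambda>n::nat. ln (real n) powr (3/2)) \<in> o(\<lambda>n. sqrt (real n))" by real_asymp
    have ev4: "eventually (\<lambda>n::nat. norm (ln (real n) powr (3/2)) \<le> ln b powr (3/2) * norm (sqrt (real n))) at_top"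
      using landau_o.smallD[OF o2] lnb by simp
    have "eventually (\<lambda>n. norm (Sm n) \<le> (A1 + A2) * norm (G n)) at_top"
      using ev1 ev2 ev3 ev4
    proof eventually_elim
      case (elim n)
      have n: "n \<ge> 1" using elim by simp
      have np: "real n > 0" using n by simp
      have lnn: "ln (real n) \<ge> 0" using n by simp
      have L2: "L n \<ge> 2" using elim(2) lnb unfolding L_def log_def by (simp add: field_simps)
      have Ln: "L n \<le> real n" using elim(3) lnb lnn unfolding L_def log_def by (simp add: field_simps)
      define K where "K = {k. k \<le> n \<and> real k < L n}"
      define h where "h = (\<lambda>k. \<Sum>t\<in>{t. psize t = k}. gt t n)"
      have finA: "finite {t. psize t \<le> n \<and> real (psize t) < L n}"
        using finite_psize_le[of n] by (rule finite_subset[rotated]) auto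
      have finK: "finite K" unfolding K_def by (rule finite_subset[of _ "{..n}"]) auto
      have "Sm n = (\<Sum>k\<in>K. \<Sum>t\<in>{t\<in>{t. psize t \<le> n \<and> real (psize t) < L n}. psize t = k}. gt t n)"
        unfolding Sm_def by (rule sum.group[OF finA finK, symmetric]) (auto simp: K_def)
      also have "\<dots> = (\<Sum>k\<in>K. h k)"
        unfolding h_def by (intro sum.cong refl arg_cong2[where f=sum]) (auto simp: K_def)
      finally have Sme: "Sm n = (\<Sum>k\<in>K. h k)" .
      have hnn: "\<forall>k\<in>K. 0 \<le> h k" unfolding h_def using gt_nonneg[OF n] by (auto intro: sum_nonneg)
      have "Sm n \<le> A1 * sqrt (real n) + A2 * (real n / L n powr (3/2))"
        unfolding Sme A1_def A2_def
      proof (rule analytic_bound[OF b n _ L2 finK])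
        show "L n = log b (real n)" by (simp add: L_def)
        show "\<forall>k\<in>K. real k < L n" by (simp add: K_def)
        show "\<forall>k\<in>K. 0 \<le> h k" by (rule hnn)
        show "\<forall>k\<in>K. k = 0 \<longrightarrow> h k = 0"
        proof (intro ballI impI)
          fix k assume "k \<in> K" "k = 0"
          have "\<And>t. psize t \<noteq> 0" using psize_pos by (simp add: Suc_le_eq)
          hence e: "{t. psize t = 0} = {}" by blast
          show "h k = 0" unfolding h_def by (simp only: \<open>k = 0\<close> e sum.empty)
        qed
        show "\<forall>k\<in>K. 1 \<le> k \<longrightarrow> h k \<le> b ^ (k + 1)"
          using sum_gt_pa[OF n] pab unfolding h_def by (meson order.trans)
        show "\<forall>k\<in>K. 1 \<le> k \<longrightarrow> h k \<le> real n / (real k * (real k + 1))"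
        proof (intro ballI impI)
          fix k assume k: "k \<in> K" "1 \<le> k"
          have "real k < real n" using k Ln unfolding K_def by simp
          hence "k < n" by simp
          thus "h k \<le> real n / (real k * (real k + 1))" unfolding h_def using sum_gt_E[OF n k(2)] by simp
        qed
      qed
      moreover have "sqrt (real n) \<le> real n / L n powr (3/2)"
      proof -
        have "L n powr (3/2) = ln (real n) powr (3/2) / ln b powr (3/2)"
          unfolding L_def log_def using lnn lnb by (simp add: powr_divide)
        also have "\<dots> \<le> sqrt (real n)" using elim(4) lnb lnn by (simp add: divide_le_eq mult.commute)
        finally have le: "L n powr (3/2) \<le> sqrt (real n)" .
        have Lp: "L n powr (3/2) > 0" using L2 by simp
        have "sqrt (real n) * L n powr (3/2) \<le> sqrt (real n) * sqrt (real n)"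
          using le by (intro mult_left_mono) auto
        also have "\<dots> = real n" using np by simp
        finally show ?thesis using Lp by (simp add: le_divide_eq)
      qed
      ultimately have "Sm n \<le> (A1 + A2) * (real n / L n powr (3/2))"
        using A1 A2 by (smt (verit) mult_left_mono distrib_right)
      moreover have "Sm n \<ge> 0" using Sme hnn by (simp add: sum_nonneg)
      moreover have "G n \<ge> 0" unfolding G_def by simp
      ultimately show ?case unfolding G_def by simp
    qed
    thus ?thesis by (rule bigoI)
  qed
  have "(\<lambda>n::nat. \<Sum>t\<in>{t. psize t \<le> n \<and> real (psize t) < log (1 / polya_sigma) (real n)}.
            1 - S_coeff t n / T_coeff n) = Sm"
    unfolding Sm_def L_def b_def gt_def by simp
  moreover have "(\<lambda>n::nat. real n / (log (1 / polya_sigma) (real n)) powr (3/2)) = G"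
    unfolding G_def L_def b_def by simp
  ultimately show ?thesis using goal by simp
qed

end
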